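(* There is an absolute constant $C>0$ such that for every $r\ge1$ and all $j,l\in\{0,\ldots,r-1\}$, the local coherences satisfy $$\mu(j,l)\le C\,2^{-j}\,2^{-|j-l|/2}.$$
   Context: Let $n=2^r$, $\mathcal{F}x(\omega)=\frac{1}{\sqrt n}\sum_{t=0}^{n-1}x(t)e^{2\pi i\omega t/n}$ for $x\in\mathbb{C}^n$. Haar vectors: $\psi(t)=2^{-r/2}$ ($0\le t<2^r$); for $l=0,\ldots,r-1$, $p=0,\ldots,2^l-1$: $\phi_{l,p}(t)=2^{(l-r)/2}$ if $p2^{r-l}\le t<(p+\tfrac12)2^{r-l}$, $-2^{(l-r)/2}$ if $(p+\tfrac12)2^{r-l}\le t<(p+1)2^{r-l}$, $0$ otherwise. Frequency bands: $W_0=\{0,1\}$, $W_j=\{-2^j+1,\ldots,-2^{j-1}\}\cup\{2^{j-1}+1,\ldots,2^j\}$ for $j=1,\ldots,r-1$. For $j,l\in\{0,\ldots,r-1\}$, $U_{jl}$ is the matrix with rows indexed by $\omega\in W_j$ and: for $l\ge1$, columns indexed by $p=0,\ldots,2^l-1$ with entries $(U_{jl})_{\omega,p}=\mathcal{F}\phi_{l,p}(\omega)$; for $l=0$, two columns with entries $(U_{j0})_{\omega,0}=\mathcal{F}\psi(\omega)$, $(U_{j0})_{\omega,1}=\mathcal{F}\phi_{0,0}(\omega)$. (These are the blocks of $U=F\Phi$, where $F$ is the DFT matrix with rows indexed by $\omega\in\{-n/2+1,\ldots,n/2\}$ and $\Phi$ has the Haar vectors as columns in the order $\psi,\phi_{0,0},\phi_{1,0},\phi_{1,1},\ldots$.)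 For a matrix $V$, its coherence is $\mu(V)=\max_{a,b}|V_{a,b}|^2$. The $(j,l)$-th local coherence is $\mu(j,l)=\sqrt{\mu(U_{jl})}\,\max_{l'=0,\ldots,r-1}\sqrt{\mu(U_{jl'})}$. *)

theory Defs
  imports "HOL-Analysis.Analysis"
begin

definition dft :: "nat \<Rightarrow> (nat \<Rightarrow> complex) \<Rightarrow> int \<Rightarrow> complex" where
  "dft r x \<omega> = (1 / complex_of_real (sqrt (real (2^r)))) *
     (\<Sum>t<2^r. x t * exp (2 * complex_of_real pi * \<i> * of_int \<omega> * of_nat t / of_nat (2^r)))"

definition haar_psi :: "nat \<Rightarrow> nat \<Rightarrow> complex" where
  "haar_psi r t = (if t < 2^r then complex_of_real (2 powr (- real r / 2)) else 0)"

text \<open>phi_{l,p}(t); the half-integer thresholds (p+1/2)2^(r-l) are handled by doubling t.\<close>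
definition haar_phi :: "nat \<Rightarrow> nat \<Rightarrow> nat \<Rightarrow> nat \<Rightarrow> complex" where
  "haar_phi r l p t =
     (if p * 2^(r-l) \<le> t \<and> 2 * t < (2*p+1) * 2^(r-l)
        then complex_of_real (2 powr ((real l - real r) / 2))
      else if (2*p+1) * 2^(r-l) \<le> 2 * t \<and> t < (p+1) * 2^(r-l)
        then - complex_of_real (2 powr ((real l - real r) / 2))
      else 0)"

definition band :: "nat \<Rightarrow> int set" where
  "band j = (if j = 0 then {0, 1}
             else {-(2^j) + 1 .. -(2^(j-1))} \<union> {2^(j-1) + 1 .. 2^j})"

definition cols :: "nat \<Rightarrow> nat set" where
  "cols l = (if l = 0 then {0, 1} else {0..<2^l})"

definition Ublock :: "nat \<Rightarrow> nat \<Rightarrow> nat \<Rightarrow> int \<Rightarrow> nat \<Rightarrow> complex" where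
  "Ublock r j l \<omega> p =
     (if l = 0 then (if p = 0 then dft r (haar_psi r) \<omega> else dft r (haar_phi r 0 0) \<omega>)
      else dft r (haar_phi r l p) \<omega>)"

definition block_coherence :: "nat \<Rightarrow> nat \<Rightarrow> nat \<Rightarrow> real" where
  "block_coherence r j l =
     Max {(cmod (Ublock r j l \<omega> p))^2 | \<omega> p. \<omega> \<in> band j \<and> p \<in> cols l}"

definition local_coherence :: "nat \<Rightarrow> nat \<Rightarrow> nat \<Rightarrow> real" where
  "local_coherence r j l =
     sqrt (block_coherence r j l) * (MAX l' \<in> {0..<r}. sqrt (block_coherence r j l'))"

end

theory Submission
  imports Defs
begin


lemma sin_half_lower:
  fixes x :: real assumes "0 \<le> x" "x \<le> pi/2"
  shows "x/2 \<le> sin x"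
proof -
  have b: "\<bar>sin x - (\<Sum>m<3. sin_coeff m * x ^ m)\<bar> \<le> inverse (fact 3) * \<bar>x\<bar> ^ 3"
    by (rule Maclaurin_sin_bound)
  have s: "(\<Sum>m<3. sin_coeff m * x ^ m) = x"
    by (simp add: numeral_3_eq_3 sin_coeff_def)
  have "pi \<le> 16/5" using pi_approx(2) by simp
  then have "x \<le> 8/5" using assms by linarith
  then have "x^2 \<le> (8/5)^2" using assms by (intro power_mono) auto
  then have "x^2 \<le> 3" by (simp add: power_divide)
  then have "x * x^2 \<le> x * 3" using assms by (intro mult_left_mono) auto
  then have "x^3 \<le> 3 * x" by (simp add: power2_eq_square power3_eq_cube mult.commute)
  moreover have "fact 3 = (6::real)" by (simp add: fact_numeral)
  ultimately show ?thesis using b s assms by (auto simp: abs_if split: if_splits)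
qed

lemma norm_1_exp_upper: "cmod (1 - exp (\<i> * complex_of_real t)) \<le> \<bar>t\<bar>"
proof -
  have "cmod (1 - exp (\<i> * complex_of_real t)) = cmod (exp (\<i> * complex_of_real t) - 1)"
    by (simp add: norm_minus_commute)
  also have "\<dots> = 2 * \<bar>sin (t/2)\<bar>" by (rule dist_exp_i_1)
  also have "\<dots> \<le> 2 * \<bar>t/2\<bar>" using abs_sin_x_le_abs_x[of "t/2"] by linarith
  finally show ?thesis by simp
qed

lemma norm_1_exp_lower: assumes "\<bar>t\<bar> \<le> pi"
  shows "\<bar>t\<bar>/2 \<le> cmod (1 - exp (\<i> * complex_of_real t))"
proof -
  have "cmod (1 - exp (\<i> * complex_of_real t)) = cmod (exp (\<i> * complex_of_real t) - 1)"
    by (simp add: norm_minus_commute)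
  also have "\<dots> = 2 * \<bar>sin (t/2)\<bar>" by (rule dist_exp_i_1)
  also have "\<bar>sin (t/2)\<bar> = sin (\<bar>t\<bar>/2)"
  proof (cases "t \<ge> 0")
    case True then show ?thesis using assms sin_ge_zero[of "t/2"] by auto
  next
    case False then have "sin (t/2) = - sin (\<bar>t\<bar>/2)" by (simp add: abs_if)
    moreover have "0 \<le> sin (\<bar>t\<bar>/2)" using assms by (intro sin_ge_zero) auto
    ultimately show ?thesis by simp
  qed
  also have "\<bar>t\<bar>/4 \<le> sin (\<bar>t\<bar>/2)" using sin_half_lower[of "\<bar>t\<bar>/2"] assms by auto
  ultimately show ?thesis by linarith
qed

lemma norm_1_exp_2: "cmod (1 - exp (\<i> * complex_of_real t)) \<le> 2"
  using norm_triangle_ineq4[of 1 "exp (\<i> * complex_of_real t)"] by simp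

lemma exp_pow: "exp (2 * complex_of_real pi * \<i> * of_int w * of_nat t / of_nat (2^r))
   = exp (\<i> * complex_of_real (2*pi*real_of_int w/2^r)) ^ t"
proof -
  have e: "of_nat t * (\<i> * complex_of_real (2*pi*real_of_int w/2^r)) =
     2 * complex_of_real pi * \<i> * of_int w * of_nat t / of_nat (2^r)"
    by (simp add: field_simps)
  show ?thesis unfolding exp_of_nat_mult[symmetric] e ..
qed



lemma sum_split_shift:
  fixes g :: "nat \<Rightarrow> complex"
  assumes "a + 2*h \<le> N" "\<And>t. t < N \<Longrightarrow> \<not> (a \<le> t \<and> t < a + 2*h) \<Longrightarrow> g t = 0"
  shows "(\<Sum>t<N. g t) = (\<Sum>t<h. g (a+t)) + (\<Sum>t<h. g (a+h+t))"
proof -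
  have "(\<Sum>t<N. g t) = (\<Sum>t\<in>{a..<a+2*h}. g t)"
    using assms by (intro sum.mono_neutral_right) auto
  also have "\<dots> = (\<Sum>t\<in>{a..<a+h}. g t) + (\<Sum>t\<in>{a+h..<a+h+h}. g t)"
    by (subst sum.atLeastLessThan_concat) (auto simp: mult_2 add.assoc)
  also have "(\<Sum>t\<in>{a..<a+h}. g t) = (\<Sum>t<h. g (a+t))"
    using sum.shift_bounds_nat_ivl[of g 0 a h] by (simp add: lessThan_atLeast0 add.commute)
  also have "(\<Sum>t\<in>{a+h..<a+h+h}. g t) = (\<Sum>t<h. g (a+h+t))"
    using sum.shift_bounds_nat_ivl[of g 0 "a+h" h] by (simp add: lessThan_atLeast0 add.commute)
  finally show ?thesis .
qed

lemma dft_phi: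
  fixes w :: int and l r p :: nat
  assumes "l < r" "p < 2^l"
  defines "z \<equiv> exp (\<i> * complex_of_real (2*pi*real_of_int w/2^r))"
    and "h \<equiv> 2^(r-l-1)::nat"
    and "c \<equiv> complex_of_real (2 powr ((real l - real r)/2))"
  shows "dft r (haar_phi r l p) w = (1 / complex_of_real (sqrt (real (2^r)))) *
          (c * z^(p*(2*h)) * (1 - z^h) * (\<Sum>t<h. z^t))"
proof -
  have L: "(2::nat)^(r-l) = 2*h" unfolding h_def using assms(1)
    by (metis Suc_diff_Suc diff_Suc_1 power_Suc zero_less_diff)
  define a where "a = p*(2*h)"
  have phi: "haar_phi r l p t = (if a \<le> t \<and> t < a+h then c else if a+h \<le> t \<and> t < a+2*h then -c else 0)" for t
    unfolding haar_phi_def c_def L a_def by (auto simp: algebra_simps)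
  have "(p+1)*2^(r-l) \<le> 2^l * 2^(r-l)" using assms(2) by (intro mult_right_mono) auto
  also have "\<dots> = (2::nat)^r" using assms(1) by (simp flip: power_add)
  finally have bnd: "a + 2*h \<le> 2^r" unfolding a_def L by (simp add: algebra_simps)
  have "(\<Sum>t<2^r. haar_phi r l p t * exp (2 * complex_of_real pi * \<i> * of_int w * of_nat t / of_nat (2^r)))
      = (\<Sum>t<2^r. haar_phi r l p t * z^t)" unfolding z_def exp_pow ..
  also have "\<dots> = (\<Sum>t<h. haar_phi r l p (a+t) * z^(a+t)) + (\<Sum>t<h. haar_phi r l p (a+h+t) * z^(a+h+t))"
    by (rule sum_split_shift[OF bnd]) (auto simp: phi)
  also have "\<dots> = (\<Sum>t<h. c * z^a * z^t) + (\<Sum>t<h. - c * z^a * z^h * z^t)"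
    by (simp add: phi power_add mult.assoc)
  also have "\<dots> = c * z^a * (1 - z^h) * (\<Sum>t<h. z^t)"
    by (simp add: sum_distrib_left sum_negf algebra_simps)
  finally show ?thesis unfolding dft_def a_def by simp
qed



lemma real_bounds:
  fixes D X Y th N H P w :: real
  assumes DY: "D * Y^2 = P / N^2 * X^4"
    and Y: "\<bar>th\<bar>/2 \<le> Y" and th: "th = 2*pi*w/N" and w: "w \<noteq> 0"
    and D0: "0 \<le> D" and X0: "0 \<le> X" and P0: "P > 0" and N: "N = 2*P*H" and H: "H > 0"
  shows "X \<le> 2 \<Longrightarrow> D \<le> 2 * P / w^2"
    and "X \<le> \<bar>th\<bar> * H \<Longrightarrow> D \<le> 10 * w^2 / P^3"
proof -
  have N0: "N > 0" using N P0 H by simp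
  have th0: "th \<noteq> 0" using th w N0 by simp
  have "(\<bar>th\<bar>/2)^2 \<le> Y^2" using Y by (intro power_mono) auto
  then have "D * (\<bar>th\<bar>/2)^2 \<le> D * Y^2" using D0 by (intro mult_left_mono)
  also have "(\<bar>th\<bar>/2)^2 = pi^2 * w^2 / N^2" unfolding th by (simp add: power_divide power_mult_distrib)
  finally have key: "D * (pi^2 * w^2 / N^2) \<le> P / N^2 * X^4" using DY by simp
  have "(3::real)*3 \<le> pi*pi" using pi_gt3 by (intro mult_mono) auto
  then have pi9: "9 \<le> pi^2" by (simp add: power2_eq_square)
  have pp: "pi \<le> 315/100" using pi_approx(2) by simp
  have "pi*pi \<le> (315/100)*(315/100::real)" using pp by (intro mult_mono) auto
  then have pi10: "pi^2 \<le> 10" by (simp add: power2_eq_square)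
  show "D \<le> 2 * P / w^2" if X2: "X \<le> 2"
  proof -
    have "X^4 \<le> 2^4" using X2 X0 by (intro power_mono) auto
    then have "P / N^2 * X^4 \<le> P / N^2 * 2^4" using P0 by (intro mult_left_mono) auto
    then have "D * (pi^2 * w^2 / N^2) \<le> P / N^2 * 16" using key by simp
    then have "D * pi^2 * w^2 \<le> 16 * P" using N0 by (simp add: field_simps)
    moreover have "D * 9 * w^2 \<le> D * pi^2 * w^2" using pi9 D0 by (intro mult_right_mono mult_left_mono) auto
    ultimately have "D * w^2 \<le> 2 * P" using P0 by linarith
    then show ?thesis using w by (simp add: field_simps)
  qed
  show "D \<le> 10 * w^2 / P^3" if XH: "X \<le> \<bar>th\<bar> * H"
  proof -
    have "X^4 \<le> (\<bar>th\<bar> * H)^4" using XH X0 by (intro power_mono) auto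
    then have "P / N^2 * X^4 \<le> P / N^2 * (\<bar>th\<bar> * H)^4" using P0 by (intro mult_left_mono) auto
    then have "D * (pi^2 * w^2 / N^2) \<le> P / N^2 * (\<bar>th\<bar> * H)^4" using key by linarith
    also have "(\<bar>th\<bar> * H)^4 = (2*pi*w/N)^4 * H^4" proof -
      have "(\<bar>th\<bar> * H)^4 = \<bar>th\<bar>^4 * H^4" by (simp add: power_mult_distrib)
      also have "\<bar>th\<bar>^4 = th^4" by (simp add: power_even_abs_numeral)
      finally show ?thesis unfolding th .
    qed
    finally have "D * (pi^2 * w^2 / N^2) \<le> P / N^2 * ((2*pi*w/N)^4 * H^4)" .
    then have "D * (pi^2 * w^2 / N^2) * N^2 \<le> P / N^2 * ((2*pi*w/N)^4 * H^4) * N^2"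
      by (intro mult_right_mono) auto
    then have "D * (pi^2 * w^2) \<le> P * ((2*pi*w/N)^4 * H^4)" using N0 by simp
    also have "(2*pi*w/N)^4 * H^4 = 16 * pi^4 * w^4 * H^4 / N^4" by (simp add: power_divide power_mult_distrib)
    also have "N^4 = 16 * P^4 * H^4" unfolding N by (simp add: power_mult_distrib)
    also have "P * (16 * pi^4 * w^4 * H^4 / (16 * P^4 * H^4)) = pi^4 * w^4 / P^3" using P0 H
      by (simp add: field_simps power_eq_if)
    finally have "D * (pi^2 * w^2) \<le> pi^2 * w^2 * (pi^2 * w^2 / P^3)" by (simp add: power_eq_if algebra_simps)
    moreover have pos: "pi^2 * w^2 > 0" using w by simp
    ultimately have "D \<le> pi^2 * w^2 / P^3" by (metis mult.commute mult_le_cancel_left_pos)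
    also have "\<dots> \<le> 10 * w^2 / P^3" using pi10 P0 by (intro divide_right_mono mult_right_mono) auto
    finally show ?thesis .
  qed
qed



lemma phi_bound:
  fixes w :: int and l r p :: nat
  assumes lr: "l < r" and p: "p < 2^l" and w: "w \<noteq> 0" and wb: "\<bar>w\<bar> \<le> 2^(r-1)"
  shows "(cmod (dft r (haar_phi r l p) w))^2 \<le> 2 * 2^l / (real_of_int w)^2"
    and "(cmod (dft r (haar_phi r l p) w))^2 \<le> 10 * (real_of_int w)^2 / (2^l)^3"
proof -
  define th where "th = 2*pi*real_of_int w/2^r"
  define z where "z = exp (\<i> * complex_of_real th)"
  define h where "h = (2::nat)^(r-l-1)"
  define c where "c = complex_of_real (2 powr ((real l - real r)/2))"
  define D where "D = (cmod (dft r (haar_phi r l p) w))^2"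
  define X where "X = cmod (1 - z^h)"
  define Y where "Y = cmod (1 - z)"
  have dft: "dft r (haar_phi r l p) w = (1 / complex_of_real (sqrt (real (2^r)))) *
          (c * z^(p*(2*h)) * (1 - z^h) * (\<Sum>t<h. z^t))"
    using dft_phi[OF lr p, of w] unfolding z_def h_def c_def th_def by simp
  have zn: "cmod (z^k) = 1" for k unfolding z_def norm_power by simp
  have zh: "z^h = exp (\<i> * complex_of_real (th * real h))"
    unfolding z_def exp_of_nat_mult[symmetric] by (simp add: algebra_simps)
  have geo: "(1 - z) * (\<Sum>t<h. z^t) = 1 - z^h" by (simp add: one_diff_power_eq)
  have eq: "dft r (haar_phi r l p) w * (1 - z) = (1 / complex_of_real (sqrt (real (2^r)))) *
          (c * z^(p*(2*h)) * (1 - z^h) * ((1 - z) * (\<Sum>t<h. z^t)))"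
    unfolding dft by (simp only: mult_ac)
  also have "\<dots> = (1 / complex_of_real (sqrt (real (2^r)))) *
          (c * z^(p*(2*h)) * (1 - z^h) * (1 - z^h))" by (simp only: geo)
  finally have eq: "dft r (haar_phi r l p) w * (1 - z) = (1 / complex_of_real (sqrt (real (2^r)))) *
          (c * z^(p*(2*h)) * (1 - z^h) * (1 - z^h))" .
  have "cmod (dft r (haar_phi r l p) w) * Y = cmod (dft r (haar_phi r l p) w * (1 - z))"
    unfolding Y_def by (simp add: norm_mult)
  also have "\<dots> = cmod ((1 / complex_of_real (sqrt (real (2^r)))) *
          (c * z^(p*(2*h)) * (1 - z^h) * (1 - z^h)))" unfolding eq ..
  also have "\<dots> = (1 / sqrt (2^r)) * (2 powr ((real l - real r)/2)) * X^2"
    unfolding X_def c_def by (simp add: norm_mult norm_divide zn power2_eq_square)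
  finally have m: "cmod (dft r (haar_phi r l p) w) * Y = (1 / sqrt (2^r)) * (2 powr ((real l - real r)/2)) * X^2" .
  have "D * Y^2 = (cmod (dft r (haar_phi r l p) w) * Y)^2" unfolding D_def by (simp add: power_mult_distrib)
  also have "\<dots> = ((1 / sqrt (2^r)) * (2 powr ((real l - real r)/2)) * X^2)^2" unfolding m ..
  also have "\<dots> = (1/2^r) * (2 powr ((real l - real r)/2))^2 * X^4"
    by (simp add: power_mult_distrib power_divide flip: power_mult)
  also have "(2 powr ((real l - real r)/2))^2 = 2 powr (real l - real r)"
    by (simp add: power2_eq_square flip: powr_add)
  also have "\<dots> = 2^l / 2^r" by (simp add: powr_diff powr_realpow)
  finally have DY: "D * Y^2 = 2^l / (2^r)^2 * X^4" by (simp add: power2_eq_square)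
  have thb: "\<bar>th\<bar> \<le> pi"
  proof -
    have "\<bar>real_of_int w\<bar> \<le> 2^(r-1)" using wb by (metis of_int_abs of_int_le_iff of_int_numeral of_int_power)
    moreover have "(2::real)^r = 2 * 2^(r-1)" using lr by (metis Suc_diff_1 gr0I not_less0 power_Suc)
    ultimately have "\<bar>real_of_int w\<bar> / 2^r \<le> 1/2" by (simp add: field_simps)
    then have "2*pi*(\<bar>real_of_int w\<bar> / 2^r) \<le> 2*pi*(1/2)" by (intro mult_left_mono) auto
    then show ?thesis unfolding th_def by (simp add: abs_mult)
  qed
  have Y: "\<bar>th\<bar>/2 \<le> Y" unfolding Y_def z_def using norm_1_exp_lower[OF thb] .
  have X2: "X \<le> 2" unfolding X_def zh by (rule norm_1_exp_2)
  have XH: "X \<le> \<bar>th\<bar> * real h" unfolding X_def zh using norm_1_exp_upper[of "th * real h"]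
    by (simp add: abs_mult)
  have N: "(2::real)^r = 2 * 2^l * real h"
  proof -
    have "r = Suc (l + (r-l-1))" using lr by simp
    then have "(2::real)^r = 2 * (2^l * 2^(r-l-1))" by (metis power_Suc power_add)
    then show ?thesis unfolding h_def by simp
  qed
  have h0: "real h > 0" by (simp add: h_def)
  have w0: "real_of_int w \<noteq> 0" using w by simp
  have D0: "0 \<le> D" by (simp add: D_def)
  have X0: "0 \<le> X" by (simp add: X_def)
  have P0: "(0::real) < 2^l" by simp
  have "D \<le> 2 * 2^l / (real_of_int w)^2"
    by (rule real_bounds(1)[OF DY Y th_def w0 D0 X0 P0 N h0 X2])
  moreover have "D \<le> 10 * (real_of_int w)^2 / (2^l)^3"
    by (rule real_bounds(2)[OF DY Y th_def w0 D0 X0 P0 N h0 XH])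
  ultimately show "(cmod (dft r (haar_phi r l p) w))^2 \<le> 2 * 2^l / (real_of_int w)^2"
    and "(cmod (dft r (haar_phi r l p) w))^2 \<le> 10 * (real_of_int w)^2 / (2^l)^3"
    unfolding D_def by auto
qed



lemma dft_phi_zero:
  assumes "l < r" "p < 2^l"
  shows "dft r (haar_phi r l p) 0 = 0"
  using dft_phi[OF assms, of 0] by simp

lemma dft_psi:
  fixes w :: int
  assumes r: "r \<ge> 1" and wb: "\<bar>w\<bar> \<le> 2^(r-1)"
  shows "cmod (dft r (haar_psi r) w) \<le> 1" and "w \<noteq> 0 \<Longrightarrow> dft r (haar_psi r) w = 0"
proof -
  define th where "th = 2*pi*real_of_int w/2^r"
  define z where "z = exp (\<i> * complex_of_real th)"
  define c where "c = complex_of_real (2 powr (- real r / 2))"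
  have e: "dft r (haar_psi r) w = (1 / complex_of_real (sqrt (real (2^r)))) * (c * (\<Sum>t<2^r. z^t))"
    unfolding dft_def haar_psi_def z_def th_def c_def exp_pow by (simp add: sum_distrib_left)
  have sq: "sqrt (2^r) = (2::real) powr (real r / 2)"
    by (simp add: powr_half_sqrt[symmetric] powr_realpow[symmetric] powr_powr)
  have cinv: "cmod c * sqrt (2^r) = 1" unfolding c_def sq by (simp flip: powr_add)
  have "cmod (\<Sum>t<(2::nat)^r. z^t) \<le> (\<Sum>t<(2::nat)^r. cmod (z^t))" by (rule norm_sum)
  also have "\<dots> = 2^r" unfolding z_def norm_power by simp
  finally have sb: "cmod (\<Sum>t<(2::nat)^r. z^t) \<le> 2^r" .
  have "cmod (dft r (haar_psi r) w) = cmod c * cmod (\<Sum>t<2^r. z^t) / sqrt (2^r)"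
    unfolding e by (simp add: norm_mult norm_divide)
  also have "\<dots> \<le> cmod c * 2^r / sqrt (2^r)" using sb by (intro divide_right_mono mult_left_mono) auto
  also have "\<dots> = cmod c * sqrt (2^r)" using real_div_sqrt[of "2^r"] by (simp add: mult.assoc[symmetric] times_divide_eq_right[symmetric])
  also have "\<dots> = 1" by (rule cinv)
  finally show "cmod (dft r (haar_psi r) w) \<le> 1" .
  assume w: "w \<noteq> 0"
  have thb: "\<bar>th\<bar> \<le> pi"
  proof -
    have "\<bar>real_of_int w\<bar> \<le> 2^(r-1)" using wb by (metis of_int_abs of_int_le_iff of_int_numeral of_int_power)
    moreover have "(2::real)^r = 2 * 2^(r-1)" proof -
      have "r = Suc (r-1)" using r by simp
      then show ?thesis by (metis power_Suc)
    qed
    ultimately have "\<bar>real_of_int w\<bar> / 2^r \<le> 1/2" by (simp add: field_simps)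
    then have "2*pi*(\<bar>real_of_int w\<bar> / 2^r) \<le> 2*pi*(1/2)" by (intro mult_left_mono) auto
    then show ?thesis unfolding th_def by (simp add: abs_mult)
  qed
  have "\<bar>th\<bar>/2 \<le> cmod (1 - z)" unfolding z_def by (rule norm_1_exp_lower[OF thb])
  moreover have "th \<noteq> 0" using w unfolding th_def by simp
  ultimately have z1: "z \<noteq> 1" by auto
  have "z^(2^r) = exp (of_nat (2^r) * (\<i> * complex_of_real th))" unfolding z_def exp_of_nat_mult ..
  also have "of_nat (2^r) * (\<i> * complex_of_real th) = \<i> * (of_int w * (of_real pi * 2))"
    unfolding th_def by simp
  also have "exp \<dots> = 1" by (rule exp_2pi_1_int)
  finally have "(\<Sum>t<2^r. z^t) = 0" using z1 by (simp add: sum_gp_strict)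
  then show "dft r (haar_psi r) w = 0" unfolding e by simp
qed



lemma band_facts:
  assumes "w \<in> band j"
  shows "\<bar>w\<bar> \<le> 2^j" "w \<noteq> 0 \<Longrightarrow> (2::int)^j \<le> 2*\<bar>w\<bar>" "j \<ge> 1 \<Longrightarrow> w \<noteq> 0"
proof -
  have "\<bar>w\<bar> \<le> 2^j \<and> (w \<noteq> 0 \<longrightarrow> (2::int)^j \<le> 2*\<bar>w\<bar>) \<and> (j \<ge> 1 \<longrightarrow> w \<noteq> 0)"
  proof (cases "j = 0")
    case True then show ?thesis using assms by (auto simp: band_def)
  next
    case False
    then have j: "(2::int)^j = 2 * 2^(j-1)" by (metis Suc_diff_1 gr0I power_Suc)
    define q where "q = (2::int)^(j-1)"
    have q0: "0 < q" unfolding q_def by simp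
    have "w \<in> {-(2*q)+1 .. -q} \<union> {q+1 .. 2*q}" using assms False unfolding band_def q_def j[symmetric] by simp
    then have mem: "-(2*q)+1 \<le> w \<and> w \<le> -q \<or> q+1 \<le> w \<and> w \<le> 2*q" by auto
    have "\<bar>w\<bar> \<le> 2*q \<and> (w \<noteq> 0 \<longrightarrow> 2*q \<le> 2*\<bar>w\<bar>) \<and> w \<noteq> 0"
      using mem q0 by (cases "w \<ge> 0") (auto simp: abs_if)
    then show ?thesis using j False unfolding q_def by simp
  qed
  then show "\<bar>w\<bar> \<le> 2^j" "w \<noteq> 0 \<Longrightarrow> (2::int)^j \<le> 2*\<bar>w\<bar>" "j \<ge> 1 \<Longrightarrow> w \<noteq> 0" by auto
qed

definition dd :: "nat \<Rightarrow> nat \<Rightarrow> nat" where "dd j l = (if l \<le> j then j - l else l - j)"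

lemma phi_entry:
  fixes w :: int
  assumes r: "r \<ge> 1" and j: "j < r" and lr: "l < r" and p: "p < 2^l" and wb: "w \<in> band j"
  shows "(cmod (dft r (haar_phi r l p) w))^2 \<le> 10 / (2^j * 2^(dd j l))"
proof (cases "w = 0")
  case True then show ?thesis using dft_phi_zero[OF lr p] by simp
next
  case False
  define W where "W = real_of_int w"
  define D where "D = (cmod (dft r (haar_phi r l p) w))^2"
  have Wb: "\<bar>W\<bar> \<le> 2^j"
  proof -
    have "real_of_int \<bar>w\<bar> \<le> real_of_int ((2::int)^j)" using band_facts(1)[OF wb] by (simp only: of_int_le_iff)
    then show ?thesis unfolding W_def by simp
  qed
  have Wl: "2^j \<le> 2*\<bar>W\<bar>"
  proof -
    have "real_of_int ((2::int)^j) \<le> real_of_int (2*\<bar>w\<bar>)" using band_facts(2)[OF wb False] by (simp only: of_int_le_iff)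
    then show ?thesis unfolding W_def by simp
  qed
  have "(2::int)^j \<le> 2^(r-1)" using j by (intro power_increasing) auto
  then have wr: "\<bar>w\<bar> \<le> 2^(r-1)" using band_facts(1)[OF wb] by linarith
  note b1 = phi_bound(1)[OF lr p False wr, folded W_def D_def]
  note b2 = phi_bound(2)[OF lr p False wr, folded W_def D_def]
  have W0: "W \<noteq> 0" using False unfolding W_def by simp
  show ?thesis
  proof (cases "l \<le> j")
    case True
    define A where "A = (2::real)^l"
    define B where "B = (2::real)^(j-l)"
    have AB: "(2::real)^j = A * B" unfolding A_def B_def using True by (simp flip: power_add)
    have A0: "A > 0" "B > 0" unfolding A_def B_def by auto
    have "(A*B)^2 \<le> (2*\<bar>W\<bar>)^2" using Wl AB A0 by (intro power_mono) auto
    then have W2: "A^2*B^2/4 \<le> W^2" by (simp add: power_mult_distrib)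
    have "D \<le> 2 * A / W^2" using b1 unfolding A_def .
    also have "\<dots> \<le> 2 * A / (A^2*B^2/4)" using W2 A0 W0 by (intro divide_left_mono) auto
    also have "\<dots> = 8 / (A*B*B)" using A0 by (simp add: field_simps power2_eq_square)
    also have "\<dots> \<le> 10 / (A*B*B)" using A0 by (intro divide_right_mono) auto
    also have "A*B*B = 2^j * 2^(dd j l)" unfolding AB dd_def B_def using True by simp
    finally show ?thesis unfolding D_def .
  next
    case False
    define A where "A = (2::real)^j"
    define B where "B = (2::real)^(l-j)"
    have AB: "(2::real)^l = A * B" unfolding A_def B_def using False by (simp flip: power_add)
    have A0: "A > 0" "B \<ge> 1" unfolding A_def B_def by auto
    have "\<bar>W\<bar>^2 \<le> A^2" unfolding A_def using Wb by (intro power_mono) auto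
    then have W2: "W^2 \<le> A^2" by simp
    have "D \<le> 10 * W^2 / (A*B)^3" using b2 unfolding AB .
    also have "\<dots> \<le> 10 * A^2 / (A*B)^3" using W2 A0 by (intro divide_right_mono) auto
    also have "\<dots> = 10 / (A * B^3)" using A0 by (simp add: field_simps power_mult_distrib power3_eq_cube power2_eq_square)
    also have "\<dots> \<le> 10 / (A * B)"
    proof -
      have "1*1 \<le> B*B" using A0 by (intro mult_mono) auto
      then have "B*1 \<le> B*(B*B)" using A0 by (intro mult_left_mono) auto
      then have "B \<le> B^3" by (simp add: power3_eq_cube)
      then show ?thesis using A0 by (intro divide_left_mono mult_left_mono) auto
    qed
    also have "A * B = 2^j * 2^(dd j l)" unfolding A_def B_def dd_def using False by simp
    finally show ?thesis unfolding D_def .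
  qed
qed



lemma entry:
  fixes w :: int
  assumes r: "r \<ge> 1" and j: "j < r" and lr: "l < r" and wb: "w \<in> band j" and p: "p \<in> cols l"
  shows "(cmod (Ublock r j l w p))^2 \<le> 10 / (2^j * 2^(dd j l))"
proof -
  have "(2::int)^j \<le> 2^(r-1)" using j by (intro power_increasing) auto
  then have wr: "\<bar>w\<bar> \<le> 2^(r-1)" using band_facts(1)[OF wb] by linarith
  show ?thesis
  proof (cases "l = 0")
    case l0: True
    show ?thesis
    proof (cases "p = 0")
      case True
      show ?thesis
      proof (cases "w = 0")
        case w0: True
        then have "j = 0" using band_facts(3)[OF wb] by fastforce
        moreover have "(cmod (dft r (haar_psi r) w))^2 \<le> 1^2"
          using dft_psi(1)[OF r wr] by (intro power_mono) auto
        ultimately show ?thesis using l0 True by (simp add: Ublock_def dd_def)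
      next
        case False
        then show ?thesis using l0 True dft_psi(2)[OF r wr] by (simp add: Ublock_def)
      qed
    next
      case False
      have "(cmod (dft r (haar_phi r 0 0) w))^2 \<le> 10 / (2^j * 2^(dd j 0))"
        using phi_entry[OF r j _ _ wb] lr l0 by simp
      then show ?thesis using l0 False by (simp add: Ublock_def)
    qed
  next
    case False
    then have "p < 2^l" using p by (simp add: cols_def)
    then show ?thesis using phi_entry[OF r j lr _ wb] False by (simp add: Ublock_def)
  qed
qed

lemma band_ne: "band j \<noteq> {}"
proof (cases "j = 0")
  case True then show ?thesis by (simp add: band_def)
next
  case False
  have "(2::int)^(j-1) + 1 \<le> 2^j" using False
    by (metis Suc_diff_1 gr0I one_le_power power_Suc mult_2 add_left_mono one_le_numeral)
  then have "(2::int)^j \<in> band j" using False by (simp add: band_def)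
  then show ?thesis by auto
qed

lemma band_fin: "finite (band j)" by (simp add: band_def)

lemma bc_bound:
  assumes r: "r \<ge> 1" and j: "j < r" and lr: "l < r"
  shows "0 \<le> block_coherence r j l" "block_coherence r j l \<le> 10 / (2^j * 2^(dd j l))"
proof -
  define f where "f = (\<lambda>(w,p). (cmod (Ublock r j l w p))^2)"
  have S: "{(cmod (Ublock r j l \<omega> p))^2 | \<omega> p. \<omega> \<in> band j \<and> p \<in> cols l} = f ` (band j \<times> cols l)"
    unfolding f_def by auto
  have fin: "finite (f ` (band j \<times> cols l))" using band_fin by (simp add: cols_def)
  have ne: "f ` (band j \<times> cols l) \<noteq> {}" using band_ne by (simp add: cols_def)
  have bc: "block_coherence r j l = Max (f ` (band j \<times> cols l))" unfolding block_coherence_def S ..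
  obtain x where x: "x \<in> f ` (band j \<times> cols l)" using ne by blast
  have "0 \<le> x" using x unfolding f_def by auto
  also have "x \<le> Max (f ` (band j \<times> cols l))" using fin x by simp
  finally show "0 \<le> block_coherence r j l" unfolding bc .
  show "block_coherence r j l \<le> 10 / (2^j * 2^(dd j l))" unfolding bc using fin ne
    by (subst Max_le_iff) (auto simp: f_def intro: entry[OF r j lr])
qed



lemma sqpow: "sqrt (2^d) = (2::real) powr (real d / 2)"
  by (simp add: powr_half_sqrt[symmetric] powr_realpow[symmetric] powr_powr)

theorem lemma2:
  shows "\<exists>C::real. C > 0 \<and> (\<forall>r::nat. r \<ge> 1 \<longrightarrow> (\<forall>j<r. \<forall>l<r.
           local_coherence r j l \<le> C * 2 powr (- real j) * 2 powr (- \<bar>real j - real l\<bar> / 2)))"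
proof (intro exI[of _ 10] conjI allI impI)
  fix r j l :: nat
  assume r: "r \<ge> 1" and j: "j < r" and lr: "l < r"
  define a where "a = 10 / ((2::real)^j * 2^(dd j l))"
  define b where "b = 10 / (2::real)^j"
  have s1: "sqrt (block_coherence r j l) \<le> sqrt a"
    unfolding a_def using bc_bound(2)[OF r j lr] by simp
  have M: "(MAX l' \<in> {0..<r}. sqrt (block_coherence r j l')) \<le> sqrt b"
  proof (subst Max_le_iff)
    show "finite ((\<lambda>l'. sqrt (block_coherence r j l')) ` {0..<r})" by simp
    show "(\<lambda>l'. sqrt (block_coherence r j l')) ` {0..<r} \<noteq> {}" using r by auto
    show "\<forall>a\<in>(\<lambda>l'. sqrt (block_coherence r j l')) ` {0..<r}. a \<le> sqrt b"
    proof
      fix x assume "x \<in> (\<lambda>l'. sqrt (block_coherence r j l')) ` {0..<r}"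
      then obtain l' where l': "l' < r" "x = sqrt (block_coherence r j l')" by auto
      have "block_coherence r j l' \<le> 10 / (2^j * 2^(dd j l'))" using bc_bound(2)[OF r j l'(1)] .
      also have "\<dots> \<le> b" unfolding b_def by (intro divide_left_mono) auto
      finally show "x \<le> sqrt b" using l' by simp
    qed
  qed
  have s0: "0 \<le> sqrt (block_coherence r j l)" using bc_bound(1)[OF r j lr] by simp
  have "sqrt (block_coherence r j l) \<le> (MAX l' \<in> {0..<r}. sqrt (block_coherence r j l'))"
    using lr by (intro Max_ge) auto
  then have M0: "0 \<le> (MAX l' \<in> {0..<r}. sqrt (block_coherence r j l'))" using s0 by linarith
  have "local_coherence r j l \<le> sqrt a * sqrt b"
    unfolding local_coherence_def using s1 M s0 M0 by (intro mult_mono) auto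
  also have "sqrt a * sqrt b = sqrt (a*b)" by (simp add: real_sqrt_mult)
  also have "a*b = (10/2^j)^2 / 2^(dd j l)" unfolding a_def b_def by (simp add: power2_eq_square)
  also have "sqrt ((10/(2::real)^j)^2 / 2^(dd j l)) = 10 / 2^j / sqrt (2^(dd j l))"
    by (simp add: real_sqrt_divide)
  also have "\<dots> = 10 * 2 powr (- real j) * 2 powr (- \<bar>real j - real l\<bar> / 2)"
  proof -
    have "\<bar>real j - real l\<bar> = real (dd j l)" unfolding dd_def by auto
    then have e1: "- \<bar>real j - real l\<bar> / 2 = - (real (dd j l) / 2)" by simp
    have "(2::real) powr (- \<bar>real j - real l\<bar> / 2) = inverse (2 powr (real (dd j l) / 2))"
      unfolding e1 by (rule powr_minus)
    also have "\<dots> = 1 / sqrt (2^(dd j l))" unfolding sqpow[symmetric] by (simp add: divide_inverse)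
    finally have "(2::real) powr (- \<bar>real j - real l\<bar> / 2) = 1 / sqrt (2^(dd j l))" .
    moreover have "(2::real) powr (- real j) = 1 / 2^j" by (simp add: powr_minus powr_realpow divide_inverse)
    ultimately show ?thesis by simp
  qed
  finally show "local_coherence r j l \<le> 10 * 2 powr (- real j) * 2 powr (- \<bar>real j - real l\<bar> / 2)" .
qed simp

end
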